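(* Let $\Omega \subset \mathbb{R}^2$ be open, bounded with $|\Omega| = 1$, and let $\Omega = \bigcup_{i=1}^N \Omega_i$ be a partition into pairwise disjoint measurable sets of positive measure. Define $\eta_0 > 0$ by $\pi\eta_0^2 = \min_{1 \le i \le N}|\Omega_i|$. For each $i$ let $B_i$ be a disk with $|B_i| = |\Omega_i|$ and $|\Omega_i \triangle B_i| = |\Omega_i|\mathcal{A}(\Omega_i)$. Let $c_1 > 0$, $d_2 \ge 0$ and assume $\sum_{i=1}^N \frac{|\Omega_i|}{|\Omega|} D(\Omega_i) \le d_2$. Let $I = \{ i \in \{1,\dots,N\} : |\Omega_i| \ge (1+c_1)\pi\eta_0^2\}$. Then $$\left|\left\{x \in \Omega : \Big\| x - \bigcup_{i \in I} B_i\Big\| \le 2\eta_0\right\}\right| \le \frac{9d_2}{c_1} + 9d_2.$$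
   Context: $|\cdot|$ is Lebesgue measure and $\triangle$ is symmetric difference. For $x \in \mathbb{R}^2$ and $A \subset \mathbb{R}^2$, $\|x - A\| := \inf_{y\in A}\|x-y\|$. Fraenkel asymmetry: $\mathcal{A}(E) := \inf_B \frac{|E\triangle B|}{|E|}$ over disks $B$ with $|B| = |E|$ (the infimum is attained). $D(\Omega_i) := \frac{|\Omega_i| - \min_{1\le j\le N}|\Omega_j|}{|\Omega_i|}$. *)

theory Defs
  imports "HOL-Analysis.Analysis"
begin

definition is_disk :: "(real^2) set \<Rightarrow> bool" where
  "is_disk B \<longleftrightarrow> (\<exists>c r. r > 0 \<and> B = ball c r)"

definition fraenkel_asymmetry :: "(real^2) set \<Rightarrow> real" where
  "fraenkel_asymmetry E =
     (INF B \<in> {B. is_disk B \<and> measure lebesgue B = measure lebesgue E}.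
        measure lebesgue ((E - B) \<union> (B - E)) / measure lebesgue E)"

definition Ddef :: "nat \<Rightarrow> (nat \<Rightarrow> (real^2) set) \<Rightarrow> nat \<Rightarrow> real" where
  "Ddef N \<Omega>s i =
     (measure lebesgue (\<Omega>s i) - Min ((\<lambda>j. measure lebesgue (\<Omega>s j)) ` {1..N}))
       / measure lebesgue (\<Omega>s i)"

text \<open>The set of points of S at distance at most t from A, with the convention
  that the distance to the empty set is +infinity (so the set is empty then).\<close>
definition near_set :: "(real^2) set \<Rightarrow> (real^2) set \<Rightarrow> real \<Rightarrow> (real^2) set" where
  "near_set S A t = {x \<in> S. A \<noteq> {} \<and> infdist x A \<le> t}"

end

theory Submission
  imports Defs
begin

lemma lmeas_cball2: "r \<ge> 0 \<Longrightarrow> measure lebesgue (cball (c::real^2) r) = pi * r^2"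
  using content_cball[of r c] by (simp add: unit_ball_vol_2)

lemma lmeas_ball2: "r \<ge> 0 \<Longrightarrow> measure lebesgue (ball (c::real^2) r) = pi * r^2"
  using content_ball[of r c] by (simp add: unit_ball_vol_2)

lemma infdist_ball_ge: "r > 0 \<Longrightarrow> dist x c - r \<le> infdist x (ball c r)"
  unfolding infdist_notempty[of "ball c r"]
  apply (subst infdist_notempty) apply simp
  apply (rule cINF_greatest) apply simp
  by (smt (verit) dist_triangle mem_ball dist_commute)

theorem mainTheorem4:
  fixes \<Omega> :: "(real^2) set" and \<Omega>s B :: "nat \<Rightarrow> (real^2) set"
    and N :: nat and \<eta>0 c1 d2 :: real
  assumes "open \<Omega>" and "bounded \<Omega>" and "measure lebesgue \<Omega> = 1"
    and "N \<ge> 1"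
    and "\<Omega> = (\<Union>i\<in>{1..N}. \<Omega>s i)"
    and "\<And>i. i \<in> {1..N} \<Longrightarrow> \<Omega>s i \<in> sets lebesgue"
    and "\<And>i. i \<in> {1..N} \<Longrightarrow> measure lebesgue (\<Omega>s i) > 0"
    and "\<And>i j. i \<in> {1..N} \<Longrightarrow> j \<in> {1..N} \<Longrightarrow> i \<noteq> j \<Longrightarrow> \<Omega>s i \<inter> \<Omega>s j = {}"
    and "\<eta>0 > 0"
    and "pi * \<eta>0 ^ 2 = Min ((\<lambda>i. measure lebesgue (\<Omega>s i)) ` {1..N})"
    and "\<And>i. i \<in> {1..N} \<Longrightarrow> is_disk (B i)"
    and "\<And>i. i \<in> {1..N} \<Longrightarrow> measure lebesgue (B i) = measure lebesgue (\<Omega>s i)"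
    and "\<And>i. i \<in> {1..N} \<Longrightarrow>
           measure lebesgue ((\<Omega>s i - B i) \<union> (B i - \<Omega>s i))
             = measure lebesgue (\<Omega>s i) * fraenkel_asymmetry (\<Omega>s i)"
    and "c1 > 0" and "d2 \<ge> 0"
    and "(\<Sum>i=1..N. measure lebesgue (\<Omega>s i) / measure lebesgue \<Omega> * Ddef N \<Omega>s i) \<le> d2"
  shows "measure lebesgue
           (near_set \<Omega> (\<Union>i\<in>{i \<in> {1..N}. measure lebesgue (\<Omega>s i) \<ge> (1 + c1) * pi * \<eta>0 ^ 2}. B i) (2 * \<eta>0))
         \<le> 9 * d2 / c1 + 9 * d2"
proof -
  define \<mu> where "\<mu> i = measure lebesgue (\<Omega>s i)" for i
  define m where "m = pi * \<eta>0 ^ 2"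
  define I where "I = {i \<in> {1..N}. measure lebesgue (\<Omega>s i) \<ge> (1 + c1) * pi * \<eta>0 ^ 2}"
  have finI: "finite I" unfolding I_def by simp
  have hm: "m \<le> \<mu> j" if "j \<in> {1..N}" for j
    unfolding m_def \<mu>_def assms(10) using that by (intro Min_le) auto
  have Minm: "Min ((\<lambda>i. measure lebesgue (\<Omega>s i)) ` {1..N}) = m" using assms(10) m_def by simp
  have "\<forall>i\<in>{1..N}. \<exists>cr. snd cr > 0 \<and> B i = ball (fst cr) (snd cr)"
    using assms(11) unfolding is_disk_def by force
  then obtain cr where cr: "\<And>i. i\<in>{1..N} \<Longrightarrow> snd (cr i) > 0 \<and> B i = ball (fst (cr i)) (snd (cr i))"
    by metis
  define c where "c i = fst (cr i)" for i
  define r where "r i = snd (cr i)" for i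
  have rpos: "\<And>i. i\<in>{1..N} \<Longrightarrow> r i > 0" and Bi: "\<And>i. i\<in>{1..N} \<Longrightarrow> B i = ball (c i) (r i)"
    using cr c_def r_def by auto
  have mur: "\<mu> i = pi * r i ^ 2" if "i \<in> {1..N}" for i
    using assms(12)[OF that] lmeas_ball2[of "r i" "c i"] rpos[OF that] Bi[OF that] \<mu>_def by simp
  have etar: "\<eta>0 \<le> r i" if "i \<in> {1..N}" for i
  proof -
    have "pi * \<eta>0^2 \<le> pi * r i ^ 2" using hm[OF that] mur[OF that] m_def by simp
    hence "\<eta>0^2 \<le> r i ^ 2" by simp
    thus ?thesis using rpos[OF that] power2_le_imp_le by fastforce
  qed
  have sub: "near_set \<Omega> (\<Union>i\<in>I. B i) (2 * \<eta>0) \<subseteq> (\<Union>i\<in>I. cball (c i) (3 * r i))"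
  proof
    fix x assume x: "x \<in> near_set \<Omega> (\<Union>i\<in>I. B i) (2 * \<eta>0)"
    hence ne: "(\<Union>i\<in>I. B i) \<noteq> {}" and le: "infdist x (\<Union>i\<in>I. B i) \<le> 2 * \<eta>0"
      unfolding near_set_def by auto
    have Ine: "I \<noteq> {}" using ne by auto
    define \<delta> where "\<delta> = Min ((\<lambda>i. infdist x (B i)) ` I)"
    have "\<delta> \<le> infdist x (\<Union>i\<in>I. B i)"
      unfolding infdist_notempty[OF ne]
    proof (rule cINF_greatest[OF ne])
      fix a assume "a \<in> (\<Union>i\<in>I. B i)"
      then obtain i where i: "i \<in> I" "a \<in> B i" by auto
      have "\<delta> \<le> infdist x (B i)" unfolding \<delta>_def using finI i by auto
      also have "\<dots> \<le> dist x a" using infdist_le[OF i(2)] .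
      finally show "\<delta> \<le> dist x a" .
    qed
    moreover obtain i where i: "i \<in> I" "infdist x (B i) = \<delta>"
    proof -
      have "\<delta> \<in> (\<lambda>i. infdist x (B i)) ` I" unfolding \<delta>_def using finI Ine by (intro Min_in) auto
      thus ?thesis using that by force
    qed
    ultimately have "infdist x (B i) \<le> 2 * \<eta>0" using le by simp
    moreover have iN: "i \<in> {1..N}" using i I_def by auto
    ultimately have "dist x (c i) - r i \<le> 2 * \<eta>0"
      using infdist_ball_ge[OF rpos[OF iN], of x "c i"] Bi[OF iN] by simp
    hence "dist (c i) x \<le> 3 * r i" using etar[OF iN] by (simp add: dist_commute)
    thus "x \<in> (\<Union>i\<in>I. cball (c i) (3 * r i))" using i by auto
  qed
  have cpt: "(\<Union>i\<in>I. cball (c i) (3 * r i)) \<in> lmeasurable"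
    by (intro lmeasurable_compact compact_UN finI) auto
  have "measure lebesgue (near_set \<Omega> (\<Union>i\<in>I. B i) (2 * \<eta>0)) \<le> measure lebesgue (\<Union>i\<in>I. cball (c i) (3 * r i))"
  proof (cases "near_set \<Omega> (\<Union>i\<in>I. B i) (2 * \<eta>0) \<in> sets lebesgue")
    case True thus ?thesis using measure_mono_fmeasurable[OF sub True cpt] by simp
  next
    case False thus ?thesis using measure_notin_sets[OF False] by simp
  qed
  also have "\<dots> \<le> (\<Sum>i\<in>I. measure lebesgue (cball (c i) (3 * r i)))"
    by (intro measure_UNION_le finI) auto
  also have "\<dots> = (\<Sum>i\<in>I. 9 * \<mu> i)"
  proof (rule sum.cong)
    fix i assume "i \<in> I" hence iN: "i \<in> {1..N}" unfolding I_def by auto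
    show "measure lebesgue (cball (c i) (3 * r i)) = 9 * \<mu> i"
      using lmeas_cball2[of "3 * r i" "c i"] rpos[OF iN] mur[OF iN] by (simp add: power_mult_distrib)
  qed simp
  also have "\<dots> \<le> (\<Sum>i\<in>I. 9 * (1 + c1) / c1 * (\<mu> i - m))"
  proof (rule sum_mono)
    fix i assume "i \<in> I"
    hence "(1 + c1) * m \<le> \<mu> i" unfolding I_def \<mu>_def m_def by (simp add: mult.assoc)
    hence "c1 * \<mu> i \<le> (1 + c1) * (\<mu> i - m)" by (simp add: algebra_simps)
    hence "\<mu> i \<le> (1 + c1) / c1 * (\<mu> i - m)" using assms(14) by (simp add: field_simps)
    hence "9 * \<mu> i \<le> 9 * ((1 + c1) / c1 * (\<mu> i - m))" by linarith
    thus "9 * \<mu> i \<le> 9 * (1 + c1) / c1 * (\<mu> i - m)" by (simp add: algebra_simps)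
  qed
  also have "\<dots> = 9 * (1 + c1) / c1 * (\<Sum>i\<in>I. (\<mu> i - m))" by (simp add: sum_distrib_left)
  also have "\<dots> \<le> 9 * (1 + c1) / c1 * (\<Sum>i\<in>{1..N}. (\<mu> i - m))"
    using assms(14) hm by (intro mult_left_mono sum_mono2) (auto simp: I_def)
  also have "(\<Sum>i\<in>{1..N}. (\<mu> i - m)) = (\<Sum>i=1..N. measure lebesgue (\<Omega>s i) / measure lebesgue \<Omega> * Ddef N \<Omega>s i)"
  proof (rule sum.cong)
    fix i assume "i \<in> {1..N}"
    thus "\<mu> i - m = measure lebesgue (\<Omega>s i) / measure lebesgue \<Omega> * Ddef N \<Omega>s i"
      using assms(7)[of i] assms(3) unfolding Ddef_def Minm \<mu>_def by simp
  qed simp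
  also have "9 * (1 + c1) / c1 * (\<Sum>i=1..N. measure lebesgue (\<Omega>s i) / measure lebesgue \<Omega> * Ddef N \<Omega>s i)
      \<le> 9 * (1 + c1) / c1 * d2"
    using assms(14,16) by (intro mult_left_mono) auto
  also have "\<dots> = 9 * d2 / c1 + 9 * d2" using assms(14) by (simp add: field_simps)
  finally show ?thesis unfolding I_def .
qed

end
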